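(* Let $r=a/b$ with $a,b$ coprime positive integers. Then $I_r$ intertwines the left sub-Laplacian $\mathcal L$ with $\square_r=\mathcal L+rT^2$: $$I_r(\mathcal Lf)=\square_r(I_rf),\qquad f\in S(\overline{\mathbb{H}}).$$
   Context: $\mathbb{H}=\mathbb{C}\times\mathbb{R}$ (coordinates $z=x+iy$, $t$) with product $(x+iy,t)(u+iv,s)=(x+u+i(y+v),\,t+s+\tfrac12(xv-yu))$; $\overline{\mathbb{H}}=\mathbb{H}/\{(0,k\pi):k\in\mathbb{Z}\}\cong\mathbb{C}\times(\mathbb{R}/\pi\mathbb{Z})$, $S(\overline{\mathbb{H}})$ its Schwartz functions. For $r=a/b$, $\gamma_r(s)=(\sqrt r e^{is/\sqrt r},\tfrac12\sqrt r s)$ and $I_rf(z,t)=\int_0^{2\pi\sqrt{ab}}f((z,t)\gamma_r(s))\,ds$. The left-invariant vector fields are $X=\partial_x-\tfrac12y\partial_t$, $Y=\partial_y+\tfrac12x\partial_t$, $T=\partial_t$, and the left sub-Laplacian is $\mathcal L=-(X^2+Y^2)$. *)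

theory Defs
  imports "HOL-Analysis.Analysis"
begin

type_synonym heis = "complex \<times> real"

definition hmul :: "heis \<Rightarrow> heis \<Rightarrow> heis" where
  "hmul p q = (fst p + fst q,
     snd p + snd q + (Re (fst p) * Im (fst q) - Im (fst p) * Re (fst q)) / 2)"

definition gam :: "real \<Rightarrow> real \<Rightarrow> heis" where
  "gam r s = (complex_of_real (sqrt r) * cis (s / sqrt r), sqrt r * s / 2)"

definition Iop :: "nat \<Rightarrow> nat \<Rightarrow> (heis \<Rightarrow> complex) \<Rightarrow> heis \<Rightarrow> complex" where
  "Iop a b f p = integral {0 .. 2 * pi * sqrt (real a * real b)}
      (\<lambda>s. f (hmul p (gam (real a / real b) s)))"

definition pdx :: "(heis \<Rightarrow> complex) \<Rightarrow> heis \<Rightarrow> complex" where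
  "pdx f p = vector_derivative (\<lambda>u. f (Complex u (Im (fst p)), snd p)) (at (Re (fst p)))"

definition pdy :: "(heis \<Rightarrow> complex) \<Rightarrow> heis \<Rightarrow> complex" where
  "pdy f p = vector_derivative (\<lambda>v. f (Complex (Re (fst p)) v, snd p)) (at (Im (fst p)))"

definition pdt :: "(heis \<Rightarrow> complex) \<Rightarrow> heis \<Rightarrow> complex" where
  "pdt f p = vector_derivative (\<lambda>s. f (fst p, s)) (at (snd p))"

definition Xf :: "(heis \<Rightarrow> complex) \<Rightarrow> heis \<Rightarrow> complex" where
  "Xf f p = pdx f p - complex_of_real (Im (fst p) / 2) * pdt f p"

definition Yf :: "(heis \<Rightarrow> complex) \<Rightarrow> heis \<Rightarrow> complex" where
  "Yf f p = pdy f p + complex_of_real (Re (fst p) / 2) * pdt f p"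

definition Tf :: "(heis \<Rightarrow> complex) \<Rightarrow> heis \<Rightarrow> complex" where
  "Tf f = pdt f"

definition subLap :: "(heis \<Rightarrow> complex) \<Rightarrow> heis \<Rightarrow> complex" where
  "subLap f p = - (Xf (Xf f) p + Yf (Yf f) p)"

definition boxr :: "real \<Rightarrow> (heis \<Rightarrow> complex) \<Rightarrow> heis \<Rightarrow> complex" where
  "boxr r f p = subLap f p + complex_of_real r * Tf (Tf f) p"

definition pd1 :: "nat \<Rightarrow> (heis \<Rightarrow> complex) \<Rightarrow> heis \<Rightarrow> complex" where
  "pd1 i f = (if i = 0 then pdx f else if i = 1 then pdy f else pdt f)"

definition iterpd :: "nat list \<Rightarrow> (heis \<Rightarrow> complex) \<Rightarrow> heis \<Rightarrow> complex" where
  "iterpd ws f = foldr pd1 ws f"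

text \<open>Schwartz functions on Hbar = H / {(0, k pi)}: functions on H that are
  pi-periodic in t, smooth (all iterated partials are differentiable), and
  all of whose partial derivatives decay faster than any power of |z|
  (uniformly in t, which ranges over the compact circle R / pi Z).\<close>
definition schwartz_Hbar :: "(heis \<Rightarrow> complex) \<Rightarrow> bool" where
  "schwartz_Hbar f \<longleftrightarrow>
     (\<forall>z t. f (z, t + pi) = f (z, t)) \<and>
     (\<forall>ws. set ws \<subseteq> {0,1,2} \<longrightarrow> (\<forall>p. iterpd ws f differentiable (at p))) \<and>
     (\<forall>ws N. set ws \<subseteq> {0,1,2} \<longrightarrow>
        (\<exists>C. \<forall>z t. (1 + (cmod z)\<^sup>2) ^ N * cmod (iterpd ws f (z, t)) \<le> C))"

end

theory Submission
  imports Defs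
begin

definition smooth :: "(heis \<Rightarrow> complex) \<Rightarrow> bool" where
  "smooth h \<longleftrightarrow> (\<forall>ws. set ws \<subseteq> {0,1,2} \<longrightarrow> (\<forall>p. iterpd ws h differentiable (at p)))"

lemma smooth_pd1: assumes "smooth h" "i \<in> {0,1,2}" shows "smooth (pd1 i h)"
  unfolding smooth_def
proof (intro allI impI)
  fix ws :: "nat list" and p assume "set ws \<subseteq> {0,1,2}"
  then have "set (ws @ [i]) \<subseteq> {0,1,2}" using assms(2) by auto
  then have "iterpd (ws @ [i]) h differentiable (at p)" using assms(1) unfolding smooth_def by blast
  then show "iterpd ws (pd1 i h) differentiable (at p)" by (simp add: iterpd_def)
qed

lemma smooth_pdx: "smooth h \<Longrightarrow> smooth (pdx h)"
  using smooth_pd1[of h 0] by (simp add: pd1_def)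
lemma smooth_pdy: "smooth h \<Longrightarrow> smooth (pdy h)"
  using smooth_pd1[of h 1] by (simp add: pd1_def)
lemma smooth_pdt: "smooth h \<Longrightarrow> smooth (pdt h)"
  using smooth_pd1[of h 2] by (simp add: pd1_def)
lemma smooth_diff: "smooth h \<Longrightarrow> h differentiable (at p)"
  unfolding smooth_def by (metis empty_set empty_subsetI foldr_Nil iterpd_def id_apply)
lemma smooth_cont: "smooth h \<Longrightarrow> continuous_on UNIV h"
  by (meson continuous_at_imp_continuous_on differentiable_imp_continuous_within smooth_diff)

lemma chainD:
  assumes "(h has_derivative D) (at (c s))" "(c has_vector_derivative c') (at s)"
  shows "((\<lambda>s. h (c s)) has_vector_derivative D c') (at s)"
  using vector_derivative_diff_chain_within[of c c' s UNIV h D] assms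
  by (simp add: comp_def has_derivative_at_withinI)

lemma path_x: "((\<lambda>u. (Complex u y, t)) has_vector_derivative (1, 0)) (at x)"
  unfolding Complex_eq by (auto intro!: derivative_eq_intros)
lemma path_y: "((\<lambda>v. (Complex x v, t)) has_vector_derivative (\<i>, 0)) (at y)"
  unfolding Complex_eq by (auto intro!: derivative_eq_intros)
lemma path_t: "((\<lambda>s. (z, s)) has_vector_derivative (0, 1)) (at t)"
  by (auto intro!: derivative_eq_intros)

lemma pd_D:
  assumes "(h has_derivative D) (at P)"
  shows "pdx h P = D (1,0)" "pdy h P = D (\<i>,0)" "pdt h P = D (0,1)"
proof -
  obtain x y t where P: "P = (Complex x y, t)" by (metis complex.exhaust surj_pair)
  have "((\<lambda>u. h (Complex u y, t)) has_vector_derivative D (1,0)) (at x)"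
    by (rule chainD[OF _ path_x]) (use assms P in simp)
  then show "pdx h P = D (1,0)" unfolding pdx_def P by (simp add: vector_derivative_at)
  have "((\<lambda>v. h (Complex x v, t)) has_vector_derivative D (\<i>,0)) (at y)"
    by (rule chainD[OF _ path_y]) (use assms P in simp)
  then show "pdy h P = D (\<i>,0)" unfolding pdy_def P by (simp add: vector_derivative_at)
  have "((\<lambda>s. h (Complex x y, s)) has_vector_derivative D (0,1)) (at t)"
    by (rule chainD[OF _ path_t]) (use assms P in simp)
  then show "pdt h P = D (0,1)" unfolding pdt_def P by (simp add: vector_derivative_at)
qed

lemma chain_pd:
  assumes "h differentiable (at (c s))" "(c has_vector_derivative (Complex \<alpha> \<beta>, \<delta>)) (at s)"
  shows "((\<lambda>s. h (c s)) has_vector_derivative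
     (of_real \<alpha> * pdx h (c s) + of_real \<beta> * pdy h (c s) + of_real \<delta> * pdt h (c s))) (at s)"
proof -
  obtain D where D: "(h has_derivative D) (at (c s))" using assms(1) unfolding differentiable_def by blast
  have lin: "linear D" using D has_derivative_linear by blast
  have e: "(Complex \<alpha> \<beta>, \<delta>) = \<alpha> *\<^sub>R (1::complex,0::real) + \<beta> *\<^sub>R (\<i>,0) + \<delta> *\<^sub>R (0,1)"
    by (simp add: Complex_eq scaleR_complex.ctr)
  have "D (Complex \<alpha> \<beta>, \<delta>) = \<alpha> *\<^sub>R D (1,0) + \<beta> *\<^sub>R D (\<i>,0) + \<delta> *\<^sub>R D (0,1)"
    unfolding e by (simp only: linear_add[OF lin] linear_scale[OF lin])
  also have "\<dots> = of_real \<alpha> * pdx h (c s) + of_real \<beta> * pdy h (c s) + of_real \<delta> * pdt h (c s)"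
    using pd_D[OF D] by (simp add: scaleR_conv_of_real)
  finally show ?thesis using chainD[OF D assms(2)] by simp
qed

lemma c10: "Complex 1 0 = 1" and c01: "Complex 0 1 = \<i>" and c00: "Complex 0 0 = 0"
  by (simp_all add: complex_eq_iff)

lemma line_x: "h differentiable (at (Complex x y, t)) \<Longrightarrow>
   ((\<lambda>u. h (Complex u y, t)) has_vector_derivative pdx h (Complex x y, t)) (at x)"
  using chain_pd[of h "\<lambda>u. (Complex u y, t)" x 1 0 0] path_x[of y t x] by (simp add: c10)
lemma line_y: "h differentiable (at (Complex x y, t)) \<Longrightarrow>
   ((\<lambda>v. h (Complex x v, t)) has_vector_derivative pdy h (Complex x y, t)) (at y)"
  using chain_pd[of h "\<lambda>v. (Complex x v, t)" y 0 1 0] path_y[of x t y] by (simp add: c01)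
lemma line_t: "h differentiable (at (z, t)) \<Longrightarrow>
   ((\<lambda>s. h (z, s)) has_vector_derivative pdt h (z, t)) (at t)"
  using chain_pd[of h "\<lambda>s. (z, s)" t 0 0 1] path_t[of z t] by (simp add: c00)

lemma hpath_x: "((\<lambda>u. hmul (Complex u y, t) g) has_vector_derivative (Complex 1 0, Im (fst g)/2)) (at x)"
  unfolding hmul_def Complex_eq by (auto intro!: derivative_eq_intros)
lemma hpath_y: "((\<lambda>v. hmul (Complex x v, t) g) has_vector_derivative (Complex 0 1, - Re (fst g)/2)) (at y)"
  unfolding hmul_def Complex_eq by (auto intro!: derivative_eq_intros)
lemma hpath_t: "((\<lambda>s. hmul (z, s) g) has_vector_derivative (Complex 0 0, 1)) (at t)"
  unfolding hmul_def Complex_eq by (auto intro!: derivative_eq_intros)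

lemma cont_gam: "continuous_on UNIV (gam r)"
  unfolding gam_def cis_conv_exp divide_inverse by (auto intro!: continuous_intros)
lemma cont_hmul: "continuous_on S g1 \<Longrightarrow> continuous_on S g2 \<Longrightarrow> continuous_on S (\<lambda>x. hmul (g1 x) (g2 x))"
  unfolding hmul_def by (auto intro!: continuous_intros)
lemma cont_comp: "continuous_on UNIV F \<Longrightarrow> continuous_on S g \<Longrightarrow> continuous_on S (\<lambda>x. F (g x))"
  by (rule continuous_on_compose2[of UNIV F S g]) auto

definition C1 :: "(heis \<Rightarrow> complex) \<Rightarrow> bool" where
  "C1 h \<longleftrightarrow> (\<forall>P. h differentiable (at P)) \<and> continuous_on UNIV (pdx h)
     \<and> continuous_on UNIV (pdy h) \<and> continuous_on UNIV (pdt h)"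

definition J :: "real \<Rightarrow> real \<Rightarrow> (real \<Rightarrow> complex) \<Rightarrow> (heis \<Rightarrow> complex) \<Rightarrow> heis \<Rightarrow> complex" where
  "J r L c h q = integral {0..L} (\<lambda>s. c s * h (hmul q (gam r s)))"

lemma C1_cont: "C1 h \<Longrightarrow> continuous_on UNIV h"
  unfolding C1_def by (meson continuous_at_imp_continuous_on differentiable_imp_continuous_within)

lemma J_hi:
  assumes "continuous_on UNIV c" "continuous_on UNIV h"
  shows "((\<lambda>s. c s * h (hmul q (gam r s))) has_integral J r L c h q) {0..L}"
  unfolding J_def
  by (rule integrable_integral, rule integrable_continuous_interval)
     (auto intro!: continuous_intros cont_comp[OF assms(2)] cont_hmul cont_gam
        continuous_on_subset[OF assms(1)] continuous_on_subset[OF cont_gam])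

lemma J_line:
  assumes h: "C1 h" and c: "continuous_on UNIV c"
    and al: "continuous_on UNIV \<alpha>" and be: "continuous_on UNIV \<beta>" and de: "continuous_on UNIV \<delta>"
    and l: "continuous_on UNIV lp"
    and dl: "\<And>u s. ((\<lambda>u. hmul (lp u) (gam r s)) has_vector_derivative (Complex (\<alpha> s) (\<beta> s), \<delta> s)) (at u)"
  shows "((\<lambda>u. J r L c h (lp u)) has_vector_derivative
     J r L (\<lambda>s. c s * of_real (\<alpha> s)) (pdx h) (lp x) + J r L (\<lambda>s. c s * of_real (\<beta> s)) (pdy h) (lp x)
     + J r L (\<lambda>s. c s * of_real (\<delta> s)) (pdt h) (lp x)) (at x)"
proof -
  note hh = h[unfolded C1_def]
  define P where "P u s = hmul (lp u) (gam r s)" for u s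
  have cP: "continuous_on S (\<lambda>(u,s). P u s)" for S
    unfolding P_def split_beta
    apply (rule cont_hmul)
    apply (rule cont_comp[OF l])
    apply (rule continuous_on_fst[OF continuous_on_id])
    apply (rule cont_comp[OF cont_gam])
    apply (rule continuous_on_snd[OF continuous_on_id])
    done
  have cPs: "continuous_on S (\<lambda>s. P u s)" for S u
    unfolding P_def
    apply (rule cont_hmul)
    apply (rule continuous_on_const)
    apply (rule cont_comp[OF cont_gam])
    apply (rule continuous_on_id)
    done
  let ?fx = "\<lambda>u s. c s * (of_real (\<alpha> s) * pdx h (P u s) + of_real (\<beta> s) * pdy h (P u s)
      + of_real (\<delta> s) * pdt h (P u s))"
  have "((\<lambda>u. integral (cbox 0 L) (\<lambda>s. c s * h (P u s))) has_vector_derivative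
        integral (cbox 0 L) (?fx x)) (at x within UNIV)"
  proof (rule leibniz_rule_vector_derivative)
    fix u s
    have "((\<lambda>u. h (P u s)) has_vector_derivative
       (of_real (\<alpha> s) * pdx h (P u s) + of_real (\<beta> s) * pdy h (P u s) + of_real (\<delta> s) * pdt h (P u s))) (at u)"
      using chain_pd[of h "\<lambda>u. P u s" u, OF _ dl[unfolded P_def[symmetric]]] hh by blast
    then show "((\<lambda>u. c s * h (P u s)) has_vector_derivative ?fx u s) (at u within UNIV)"
      by (rule has_vector_derivative_mult_right)
  next
    fix u
    show "(\<lambda>s. c s * h (P u s)) integrable_on cbox 0 L"
      apply (rule integrable_continuous)
      apply (rule continuous_on_mult)
      apply (rule continuous_on_subset[OF c], simp)
      apply (rule cont_comp[OF C1_cont[OF h] cPs])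
      done
  next
    show "continuous_on (UNIV \<times> cbox 0 L) (\<lambda>(u, s). ?fx u s)"
      unfolding split_beta
      apply (intro continuous_on_mult continuous_on_add)
      apply (rule cont_comp[OF c continuous_on_snd[OF continuous_on_id]])
      apply (rule continuous_on_of_real, rule cont_comp[OF al continuous_on_snd[OF continuous_on_id]])
      apply (rule cont_comp[of "pdx h"], use hh in blast, rule cP[unfolded split_beta])
      apply (rule continuous_on_of_real, rule cont_comp[OF be continuous_on_snd[OF continuous_on_id]])
      apply (rule cont_comp[of "pdy h"], use hh in blast, rule cP[unfolded split_beta])
      apply (rule continuous_on_of_real, rule cont_comp[OF de continuous_on_snd[OF continuous_on_id]])
      apply (rule cont_comp[of "pdt h"], use hh in blast, rule cP[unfolded split_beta])
      done




  qed auto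
  moreover
  have i1: "((\<lambda>s. c s * of_real (\<alpha> s) * pdx h (P x s)) has_integral J r L (\<lambda>s. c s * of_real (\<alpha> s)) (pdx h) (lp x)) {0..L}"
    unfolding P_def by (rule J_hi) (use hh in \<open>auto intro!: continuous_on_mult c continuous_on_of_real cont_comp[OF al] continuous_on_id\<close>)
  have i2: "((\<lambda>s. c s * of_real (\<beta> s) * pdy h (P x s)) has_integral J r L (\<lambda>s. c s * of_real (\<beta> s)) (pdy h) (lp x)) {0..L}"
    unfolding P_def by (rule J_hi) (use hh in \<open>auto intro!: continuous_on_mult c continuous_on_of_real cont_comp[OF be] continuous_on_id\<close>)
  have i3: "((\<lambda>s. c s * of_real (\<delta> s) * pdt h (P x s)) has_integral J r L (\<lambda>s. c s * of_real (\<delta> s)) (pdt h) (lp x)) {0..L}"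
    unfolding P_def by (rule J_hi) (use hh in \<open>auto intro!: continuous_on_mult c continuous_on_of_real cont_comp[OF de] continuous_on_id\<close>)
  have "integral (cbox 0 L) (?fx x) = J r L (\<lambda>s. c s * of_real (\<alpha> s)) (pdx h) (lp x) + J r L (\<lambda>s. c s * of_real (\<beta> s)) (pdy h) (lp x)
     + J r L (\<lambda>s. c s * of_real (\<delta> s)) (pdt h) (lp x)"
    using has_integral_add[OF has_integral_add[OF i1 i2] i3]
    by (intro integral_unique) (simp add: algebra_simps)
  ultimately show ?thesis unfolding J_def P_def by simp
qed

definition gu :: "real \<Rightarrow> real \<Rightarrow> real" where "gu r s = sqrt r * cos (s / sqrt r)"
definition gv :: "real \<Rightarrow> real \<Rightarrow> real" where "gv r s = sqrt r * sin (s / sqrt r)"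

lemma cont_gu: "continuous_on S (gu r)"
  unfolding gu_def divide_inverse by (intro continuous_intros)
lemma cont_gv: "continuous_on S (gv r)"
  unfolding gv_def divide_inverse by (intro continuous_intros)

lemma hmul_gam_Re: "Re (fst (hmul q (gam r s))) = Re (fst q) + gu r s"
  by (simp add: hmul_def gam_def gu_def)
lemma hmul_gam_Im: "Im (fst (hmul q (gam r s))) = Im (fst q) + gv r s"
  by (simp add: hmul_def gam_def gv_def)
lemma gam_Re: "Re (fst (gam r s)) = gu r s" by (simp add: gam_def gu_def)
lemma gam_Im: "Im (fst (gam r s)) = gv r s" by (simp add: gam_def gv_def)

lemma J_zero: "J r L (\<lambda>s. 0) h q = 0" by (simp add: J_def)

lemma cont_line_x: "continuous_on UNIV (\<lambda>u. (Complex u y, t))"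
  unfolding Complex_eq by (intro continuous_intros)
lemma cont_line_y: "continuous_on UNIV (\<lambda>v. (Complex x v, t))"
  unfolding Complex_eq by (intro continuous_intros)
lemma cont_line_t: "continuous_on UNIV (\<lambda>s. (z::complex, s))"
  by (intro continuous_intros)

lemma Jx:
  assumes "C1 h" "continuous_on UNIV c"
  shows "((\<lambda>u. J r L c h (Complex u y, t)) has_vector_derivative
     J r L c (pdx h) (Complex x y, t) + J r L (\<lambda>s. c s * of_real (gv r s / 2)) (pdt h) (Complex x y, t)) (at x)"
proof -
  have "((\<lambda>u. J r L c h (Complex u y, t)) has_vector_derivative
     J r L (\<lambda>s. c s * of_real 1) (pdx h) (Complex x y, t) + J r L (\<lambda>s. c s * of_real 0) (pdy h) (Complex x y, t)
     + J r L (\<lambda>s. c s * of_real (gv r s / 2)) (pdt h) (Complex x y, t)) (at x)"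
    by (rule J_line[OF assms]) (auto intro: continuous_on_divide cont_gv cont_line_x hpath_x[of y t "gam r s" for s, unfolded gam_Im])
  then show ?thesis by (simp only: of_real_1 of_real_0 mult_1_right mult_zero_right J_zero add_0_right)
qed

lemma Jy:
  assumes "C1 h" "continuous_on UNIV c"
  shows "((\<lambda>v. J r L c h (Complex x v, t)) has_vector_derivative
     J r L c (pdy h) (Complex x y, t) + J r L (\<lambda>s. c s * of_real (- gu r s / 2)) (pdt h) (Complex x y, t)) (at y)"
proof -
  have "((\<lambda>v. J r L c h (Complex x v, t)) has_vector_derivative
     J r L (\<lambda>s. c s * of_real 0) (pdx h) (Complex x y, t) + J r L (\<lambda>s. c s * of_real 1) (pdy h) (Complex x y, t)
     + J r L (\<lambda>s. c s * of_real (- gu r s / 2)) (pdt h) (Complex x y, t)) (at y)"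
    apply (rule J_line[OF assms])
    apply (rule continuous_on_const)
    apply (rule continuous_on_const)
    apply (intro continuous_on_divide continuous_on_minus cont_gu continuous_on_const, simp)
    apply (rule cont_line_y)
    apply (rule hpath_y[of x t "gam r s" for s, unfolded gam_Re])
    done
  then show ?thesis by (simp only: of_real_1 of_real_0 mult_1_right mult_zero_right J_zero add_0_right add_0_left)
qed

lemma Jt:
  assumes "C1 h" "continuous_on UNIV c"
  shows "((\<lambda>s. J r L c h (z, s)) has_vector_derivative J r L c (pdt h) (z, t)) (at t)"
proof -
  have "((\<lambda>s. J r L c h (z, s)) has_vector_derivative
     J r L (\<lambda>s. c s * of_real 0) (pdx h) (z, t) + J r L (\<lambda>s. c s * of_real 0) (pdy h) (z, t)
     + J r L (\<lambda>s. c s * of_real 1) (pdt h) (z, t)) (at t)"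
    by (rule J_line[OF assms]) (auto intro: cont_line_t hpath_t)
  then show ?thesis by (simp only: of_real_1 of_real_0 mult_1_right mult_zero_right J_zero add_0_right add_0_left)
qed

lemma pt_split: "q = (Complex (Re (fst q)) (Im (fst q)), snd q)" by simp

lemma pdx_J:
  assumes "C1 h" "continuous_on UNIV c"
  shows "pdx (J r L c h) q = J r L c (pdx h) q + J r L (\<lambda>s. c s * of_real (gv r s / 2)) (pdt h) q"
  using Jx[OF assms, of r L "Im (fst q)" "snd q" "Re (fst q)"]
  by (simp add: pdx_def vector_derivative_at)
lemma pdy_J:
  assumes "C1 h" "continuous_on UNIV c"
  shows "pdy (J r L c h) q = J r L c (pdy h) q + J r L (\<lambda>s. c s * of_real (- gu r s / 2)) (pdt h) q"
  using Jy[OF assms, of r L "Re (fst q)" "snd q" "Im (fst q)"]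
  by (simp add: pdy_def vector_derivative_at)
lemma pdt_J:
  assumes "C1 h" "continuous_on UNIV c"
  shows "pdt (J r L c h) q = J r L c (pdt h) q"
  using Jt[OF assms, of r L "fst q" "snd q"]
  by (simp add: pdt_def vector_derivative_at)

lemma smooth_C1: "smooth h \<Longrightarrow> C1 h"
  unfolding C1_def using smooth_diff smooth_cont smooth_pdx smooth_pdy smooth_pdt by blast

definition lop :: "real \<Rightarrow> real \<Rightarrow> (heis \<Rightarrow> complex) \<Rightarrow> (heis \<Rightarrow> complex) \<Rightarrow> heis \<Rightarrow> complex" where
  "lop k1 k2 A B Q = A Q + of_real (k1 * Re (fst Q) + k2 * Im (fst Q)) * B Q"

lemma lop_dx:
  assumes "A differentiable (at (Complex x y, t))" "B differentiable (at (Complex x y, t))"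
  shows "((\<lambda>u. lop k1 k2 A B (Complex u y, t)) has_vector_derivative
     pdx A (Complex x y, t) + (of_real (k1 * x + k2 * y) * pdx B (Complex x y, t) + of_real k1 * B (Complex x y, t))) (at x)"
proof -
  have d: "((\<lambda>u. k1 * u + k2 * y) has_field_derivative k1) (at x)"
    by (auto intro!: derivative_eq_intros)
  show ?thesis
    unfolding lop_def using has_vector_derivative_add[OF line_x[OF assms(1)]
      has_vector_derivative_mult[OF has_vector_derivative_of_real[OF d] line_x[OF assms(2)]]]
    by simp
qed

lemma lop_dy:
  assumes "A differentiable (at (Complex x y, t))" "B differentiable (at (Complex x y, t))"
  shows "((\<lambda>v. lop k1 k2 A B (Complex x v, t)) has_vector_derivative
     pdy A (Complex x y, t) + (of_real (k1 * x + k2 * y) * pdy B (Complex x y, t) + of_real k2 * B (Complex x y, t))) (at y)"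
proof -
  have d: "((\<lambda>v. k1 * x + k2 * v) has_field_derivative k2) (at y)"
    by (auto intro!: derivative_eq_intros)
  show ?thesis
    unfolding lop_def using has_vector_derivative_add[OF line_y[OF assms(1)]
      has_vector_derivative_mult[OF has_vector_derivative_of_real[OF d] line_y[OF assms(2)]]]
    by simp
qed

lemma lop_dt:
  assumes "A differentiable (at (z, t))" "B differentiable (at (z, t))"
  shows "((\<lambda>s. lop k1 k2 A B (z, s)) has_vector_derivative
     pdt A (z, t) + of_real (k1 * Re z + k2 * Im z) * pdt B (z, t)) (at t)"
  unfolding lop_def using has_vector_derivative_add[OF line_t[OF assms(1)]
      has_vector_derivative_mult_right[OF line_t[OF assms(2)]]]
  by simp

lemma lop_pd:
  assumes "\<forall>P. A differentiable (at P)" "\<forall>P. B differentiable (at P)"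
  shows "pdx (lop k1 k2 A B) Q = pdx A Q + of_real (k1 * Re (fst Q) + k2 * Im (fst Q)) * pdx B Q + of_real k1 * B Q"
    "pdy (lop k1 k2 A B) Q = pdy A Q + of_real (k1 * Re (fst Q) + k2 * Im (fst Q)) * pdy B Q + of_real k2 * B Q"
    "pdt (lop k1 k2 A B) Q = pdt A Q + of_real (k1 * Re (fst Q) + k2 * Im (fst Q)) * pdt B Q"
proof -
  obtain x y t where Q: "Q = (Complex x y, t)" by (metis complex.exhaust surj_pair)
  show "pdx (lop k1 k2 A B) Q = pdx A Q + of_real (k1 * Re (fst Q) + k2 * Im (fst Q)) * pdx B Q + of_real k1 * B Q"
    using lop_dx[of A x y t B k1 k2] assms unfolding Q pdx_def
    by (simp add: vector_derivative_at add.assoc)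
  show "pdy (lop k1 k2 A B) Q = pdy A Q + of_real (k1 * Re (fst Q) + k2 * Im (fst Q)) * pdy B Q + of_real k2 * B Q"
    using lop_dy[of A x y t B k1 k2] assms unfolding Q pdy_def
    by (simp add: vector_derivative_at add.assoc)
  show "pdt (lop k1 k2 A B) Q = pdt A Q + of_real (k1 * Re (fst Q) + k2 * Im (fst Q)) * pdt B Q"
    using lop_dt[of A "Complex x y" t B k1 k2] assms unfolding Q pdt_def
    by (simp add: vector_derivative_at)
qed

lemma cont_coef: "continuous_on S (\<lambda>Q::heis. complex_of_real (k1 * Re (fst Q) + k2 * Im (fst Q)))"
  by (intro continuous_intros)

lemma lop_cont:
  assumes "continuous_on UNIV A" "continuous_on UNIV B"
  shows "continuous_on UNIV (lop k1 k2 A B)"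
  unfolding lop_def by (intro continuous_on_add continuous_on_mult assms cont_coef)

lemma lop_diff:
  assumes "\<forall>P. A differentiable (at P)" "\<forall>P. B differentiable (at P)"
  shows "lop k1 k2 A B differentiable (at P)"
proof -
  have c: "(\<lambda>Q::heis. complex_of_real (k1 * Re (fst Q) + k2 * Im (fst Q))) differentiable (at P)"
    by (rule bounded_linear_imp_differentiable)
       (intro bounded_linear_compose[OF bounded_linear_of_real] bounded_linear_add
         bounded_linear_compose[OF bounded_linear_mult_right] 
         bounded_linear_compose[OF bounded_linear_Re] bounded_linear_compose[OF bounded_linear_Im]
         bounded_linear_fst)
  have "A differentiable (at P)" "B differentiable (at P)" using assms by blast+
  with c show ?thesis unfolding lop_def
    by (intro differentiable_add differentiable_mult) auto
qed

lemma lop_C1: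
  assumes "C1 A" "C1 B"
  shows "C1 (lop k1 k2 A B)"
proof -
  note a = assms[unfolded C1_def]
  have cA: "continuous_on UNIV A" "continuous_on UNIV B" using assms C1_cont by auto
  show ?thesis unfolding C1_def
    using a cA
    by (auto simp: lop_pd[OF conjunct1[OF a(1)] conjunct1[OF a(2)]] lop_diff
       intro!: continuous_intros)
qed

lemma Xf_lop: "Xf h = lop 0 (-1/2) (pdx h) (pdt h)"
  by (rule ext) (simp add: Xf_def lop_def)
lemma Yf_lop: "Yf h = lop (1/2) 0 (pdy h) (pdt h)"
  by (rule ext) (simp add: Yf_def lop_def)

lemma smooth_C1_X: "smooth h \<Longrightarrow> C1 (Xf h)"
  unfolding Xf_lop by (intro lop_C1 smooth_C1 smooth_pdx smooth_pdt)
lemma smooth_C1_Y: "smooth h \<Longrightarrow> C1 (Yf h)"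
  unfolding Yf_lop by (intro lop_C1 smooth_C1 smooth_pdy smooth_pdt)
lemma C1_cont_X: "C1 h \<Longrightarrow> continuous_on UNIV (Xf h)"
  unfolding Xf_lop C1_def by (intro lop_cont) auto
lemma C1_cont_Y: "C1 h \<Longrightarrow> continuous_on UNIV (Yf h)"
  unfolding Yf_lop C1_def by (intro lop_cont) auto
lemma C1_cont_T: "C1 h \<Longrightarrow> continuous_on UNIV (Tf h)"
  unfolding Tf_def C1_def by auto

lemma hi_eq: "(F has_integral A) S \<Longrightarrow> (G has_integral B) S \<Longrightarrow> (\<And>s. s \<in> S \<Longrightarrow> F s = G s) \<Longrightarrow> A = B"
  by (metis has_integral_eq has_integral_unique)

lemma cont_cgv: "continuous_on UNIV c \<Longrightarrow> continuous_on UNIV (\<lambda>s. c s * complex_of_real (gv r s * k))"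
  by (intro continuous_on_mult continuous_on_of_real cont_gv continuous_on_const) auto
lemma cont_cgu: "continuous_on UNIV c \<Longrightarrow> continuous_on UNIV (\<lambda>s. c s * complex_of_real (gu r s * k))"
  by (intro continuous_on_mult continuous_on_of_real cont_gu continuous_on_const) auto

lemma XJ:
  assumes h: "C1 h" and c: "continuous_on UNIV c"
  shows "Xf (J r L c h) q = J r L c (Xf h) q + J r L (\<lambda>s. c s * of_real (gv r s)) (Tf h) q"
proof -
  note hh = h[unfolded C1_def]
  have c2: "continuous_on UNIV (\<lambda>s. c s * of_real (gv r s / 2))" using cont_cgv[OF c, of r "1/2"] by simp
  have c3: "continuous_on UNIV (\<lambda>s. c s * of_real (gv r s))" using cont_cgv[OF c, of r 1] by simp
  have cpx: "continuous_on UNIV (pdx h)" and cpt: "continuous_on UNIV (pdt h)" using hh by auto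
  note i1 = J_hi[OF c cpx, where q=q and r=r and L=L]
  note i2 = J_hi[OF c2 cpt, where q=q and L=L]
  note i3 = J_hi[OF c cpt, where q=q and r=r and L=L]
  note i4 = J_hi[OF c C1_cont_X[OF h], where q=q and r=r and L=L]
  note i5 = J_hi[OF c3 C1_cont_T[OF h], where q=q and L=L]
  have "J r L c (pdx h) q + J r L (\<lambda>s. c s * of_real (gv r s / 2)) (pdt h) q
      - of_real (Im (fst q) / 2) * J r L c (pdt h) q
     = J r L c (Xf h) q + J r L (\<lambda>s. c s * of_real (gv r s)) (Tf h) q"
    by (rule hi_eq[OF has_integral_diff[OF has_integral_add[OF i1 i2] has_integral_mult_right[OF i3]]
        has_integral_add[OF i4 i5]])
      (simp add: Xf_def Tf_def hmul_gam_Im field_simps)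
  then show ?thesis
    by (simp add: Xf_def pdx_J[OF h c] pdt_J[OF h c])
qed

lemma YJ:
  assumes h: "C1 h" and c: "continuous_on UNIV c"
  shows "Yf (J r L c h) q = J r L c (Yf h) q + J r L (\<lambda>s. c s * of_real (- gu r s)) (Tf h) q"
proof -
  note hh = h[unfolded C1_def]
  have c2: "continuous_on UNIV (\<lambda>s. c s * of_real (- gu r s / 2))" using cont_cgu[OF c, of r "-1/2"] by simp
  have c3: "continuous_on UNIV (\<lambda>s. c s * of_real (- gu r s))" using cont_cgu[OF c, of r "-1"] by simp
  have cpy: "continuous_on UNIV (pdy h)" and cpt: "continuous_on UNIV (pdt h)" using hh by auto
  note i1 = J_hi[OF c cpy, where q=q and r=r and L=L]
  note i2 = J_hi[OF c2 cpt, where q=q and L=L]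
  note i3 = J_hi[OF c cpt, where q=q and r=r and L=L]
  note i4 = J_hi[OF c C1_cont_Y[OF h], where q=q and r=r and L=L]
  note i5 = J_hi[OF c3 C1_cont_T[OF h], where q=q and L=L]
  have "J r L c (pdy h) q + J r L (\<lambda>s. c s * of_real (- gu r s / 2)) (pdt h) q
      + of_real (Re (fst q) / 2) * J r L c (pdt h) q
     = J r L c (Yf h) q + J r L (\<lambda>s. c s * of_real (- gu r s)) (Tf h) q"
    by (rule hi_eq[OF has_integral_add[OF has_integral_add[OF i1 i2] has_integral_mult_right[OF i3]]
        has_integral_add[OF i4 i5]])
      (simp add: Yf_def Tf_def hmul_gam_Re field_simps)
  then show ?thesis
    by (simp add: Yf_def pdy_J[OF h c] pdt_J[OF h c])
qed

lemma TJ: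
  assumes h: "C1 h" and c: "continuous_on UNIV c"
  shows "Tf (J r L c h) q = J r L c (Tf h) q"
  by (simp add: Tf_def pdt_J[OF h c])

lemma Xf_Jadd:
  assumes "C1 h1" "C1 h2" "continuous_on UNIV c1" "continuous_on UNIV c2"
  shows "Xf (\<lambda>q. J r L c1 h1 q + J r L c2 h2 q) p = Xf (J r L c1 h1) p + Xf (J r L c2 h2) p"
proof -
  obtain x y t where p: "p = (Complex x y, t)" by (metis complex.exhaust surj_pair)
  have "(\<lambda>u. J r L c1 h1 (Complex u y, t)) differentiable (at x)"
    "(\<lambda>u. J r L c2 h2 (Complex u y, t)) differentiable (at x)"
    "(\<lambda>s. J r L c1 h1 (Complex x y, s)) differentiable (at t)"
    "(\<lambda>s. J r L c2 h2 (Complex x y, s)) differentiable (at t)"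
    using Jx[OF assms(1,3)] Jx[OF assms(2,4)] Jt[OF assms(1,3)] Jt[OF assms(2,4)]
    by (blast intro: differentiableI_vector)+
  then show ?thesis unfolding p Xf_def pdx_def pdt_def by (simp add: algebra_simps)
qed

lemma Yf_Jadd:
  assumes "C1 h1" "C1 h2" "continuous_on UNIV c1" "continuous_on UNIV c2"
  shows "Yf (\<lambda>q. J r L c1 h1 q + J r L c2 h2 q) p = Yf (J r L c1 h1) p + Yf (J r L c2 h2) p"
proof -
  obtain x y t where p: "p = (Complex x y, t)" by (metis complex.exhaust surj_pair)
  have "(\<lambda>u. J r L c1 h1 (Complex x u, t)) differentiable (at y)"
    "(\<lambda>u. J r L c2 h2 (Complex x u, t)) differentiable (at y)"
    "(\<lambda>s. J r L c1 h1 (Complex x y, s)) differentiable (at t)"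
    "(\<lambda>s. J r L c2 h2 (Complex x y, s)) differentiable (at t)"
    using Jy[OF assms(1,3)] Jy[OF assms(2,4)] Jt[OF assms(1,3)] Jt[OF assms(2,4)]
    by (blast intro: differentiableI_vector)+
  then show ?thesis unfolding p Yf_def pdy_def pdt_def by (simp add: algebra_simps)
qed

lemma cont_pair_x: "continuous_on S (\<lambda>z::real\<times>real. (Complex (fst z) y, snd z))"
  unfolding Complex_eq by (intro continuous_intros)
lemma cont_pair_y: "continuous_on S (\<lambda>z::real\<times>real. (Complex x (fst z), snd z))"
  unfolding Complex_eq by (intro continuous_intros)

lemma sym_xt:
  assumes sm: "smooth h"
  shows "pdt (pdx h) (Complex x y, t) = pdx (pdt h) (Complex x y, t)"
proof -
  define a where "a = t - 1"
  define b where "b = t + 1"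
  have dh: "\<And>P. h differentiable (at P)" using smooth_diff[OF sm] .
  have dg: "\<And>P. pdt h differentiable (at P)" using smooth_diff[OF smooth_pdt[OF sm]] .
  have cg: "continuous_on UNIV (pdt h)" using smooth_cont[OF smooth_pdt[OF sm]] .
  have cg': "continuous_on UNIV (pdx (pdt h))" using smooth_cont[OF smooth_pdx[OF smooth_pdt[OF sm]]] .
  define \<phi> where "\<phi> \<sigma> = pdx (pdt h) (Complex x y, \<sigma>)" for \<sigma>
  have S1: "h (Complex u y, \<tau>) = h (Complex u y, a) + integral {a..\<tau>} (\<lambda>\<sigma>. pdt h (Complex u y, \<sigma>))"
    if "a \<le> \<tau>" for u \<tau>
  proof -
    have "((\<lambda>\<sigma>. pdt h (Complex u y, \<sigma>)) has_integral (h (Complex u y, \<tau>) - h (Complex u y, a))) {a..\<tau>}"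
      by (rule fundamental_theorem_of_calculus[OF that])
         (auto intro: has_vector_derivative_at_within line_t dh)
    then show ?thesis by (simp add: integral_unique)
  qed
  have S2: "((\<lambda>u. integral {a..\<tau>} (\<lambda>\<sigma>. pdt h (Complex u y, \<sigma>))) has_vector_derivative integral {a..\<tau>} \<phi>) (at x)"
    for \<tau>
  proof -
    have "((\<lambda>u. integral (cbox a \<tau>) (\<lambda>\<sigma>. pdt h (Complex u y, \<sigma>))) has_vector_derivative
        integral (cbox a \<tau>) (\<lambda>\<sigma>. pdx (pdt h) (Complex x y, \<sigma>))) (at x within UNIV)"
    proof (rule leibniz_rule_vector_derivative)
      fix u \<sigma>
      show "((\<lambda>u. pdt h (Complex u y, \<sigma>)) has_vector_derivative pdx (pdt h) (Complex u y, \<sigma>)) (at u within UNIV)"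
        using line_x[OF dg] by simp
    next
      fix u
      show "(\<lambda>\<sigma>. pdt h (Complex u y, \<sigma>)) integrable_on cbox a \<tau>"
        by (rule integrable_continuous, rule cont_comp[OF cg]) (intro continuous_intros)
    next
      show "continuous_on (UNIV \<times> cbox a \<tau>) (\<lambda>(u, \<sigma>). pdx (pdt h) (Complex u y, \<sigma>))"
        unfolding split_beta by (rule cont_comp[OF cg' cont_pair_x])
    qed auto
    then show ?thesis unfolding \<phi>_def[abs_def] by simp
  qed
  have S3: "pdx h (Complex x y, \<tau>) = pdx h (Complex x y, a) + integral {a..\<tau>} \<phi>" if "a \<le> \<tau>" for \<tau>
  proof -
    have e: "(\<lambda>u. h (Complex u y, \<tau>)) = (\<lambda>u. h (Complex u y, a) + integral {a..\<tau>} (\<lambda>\<sigma>. pdt h (Complex u y, \<sigma>)))"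
      by (rule ext) (rule S1[OF that])
    have d2: "((\<lambda>u. h (Complex u y, \<tau>)) has_vector_derivative pdx h (Complex x y, a) + integral {a..\<tau>} \<phi>) (at x)"
      unfolding e by (rule has_vector_derivative_add[OF line_x[OF dh] S2])
    show ?thesis by (rule vector_derivative_unique_at[OF line_x[OF dh, where x=x and y=y and t=\<tau>] d2])
  qed
  have A1: "((\<lambda>u. integral {a..u} \<phi>) has_vector_derivative \<phi> t) (at t within {a..b})"
  proof (rule integral_has_vector_derivative)
    show "continuous_on {a..b} \<phi>" unfolding \<phi>_def[abs_def]
      by (rule cont_comp[OF cg']) (intro continuous_intros)
    show "t \<in> {a..b}" by (simp add: a_def b_def)
  qed
  have A2: "at t within {a..b} = at t"
    by (rule at_within_interior) (simp add: a_def b_def)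
  have A3: "((\<lambda>u. integral {a..u} \<phi>) has_vector_derivative \<phi> t) (at t)" using A1 unfolding A2 .
  have A4: "((\<lambda>u. pdx h (Complex x y, a) + integral {a..u} \<phi>) has_vector_derivative 0 + \<phi> t) (at t)"
    by (rule has_vector_derivative_add[OF has_vector_derivative_const A3])
  have A5: "((\<lambda>u. pdx h (Complex x y, u)) has_vector_derivative 0 + \<phi> t) (at t)"
  proof (rule has_vector_derivative_transform_within_open[OF A4, of "{a<..<b}"])
    show "t \<in> {a<..<b}" by (simp add: a_def b_def)
    show "open {a<..<b}" by simp
    fix u assume "u \<in> {a<..<b}"
    then have "a \<le> u" by simp
    then show "pdx h (Complex x y, a) + integral {a..u} \<phi> = pdx h (Complex x y, u)" by (rule S3[symmetric])
  qed
  have "pdt (pdx h) (Complex x y, t) = 0 + \<phi> t"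
    unfolding pdt_def using A5 by (simp only: fst_conv snd_conv vector_derivative_at)
  then show ?thesis by (simp add: \<phi>_def)
qed

lemma sym_yt:
  assumes sm: "smooth h"
  shows "pdt (pdy h) (Complex x y, t) = pdy (pdt h) (Complex x y, t)"
proof -
  define a where "a = t - 1"
  define b where "b = t + 1"
  have dh: "\<And>P. h differentiable (at P)" using smooth_diff[OF sm] .
  have dg: "\<And>P. pdt h differentiable (at P)" using smooth_diff[OF smooth_pdt[OF sm]] .
  have cg: "continuous_on UNIV (pdt h)" using smooth_cont[OF smooth_pdt[OF sm]] .
  have cg': "continuous_on UNIV (pdy (pdt h))" using smooth_cont[OF smooth_pdy[OF smooth_pdt[OF sm]]] .
  define \<phi> where "\<phi> \<sigma> = pdy (pdt h) (Complex x y, \<sigma>)" for \<sigma>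
  have S1: "h (Complex x u, \<tau>) = h (Complex x u, a) + integral {a..\<tau>} (\<lambda>\<sigma>. pdt h (Complex x u, \<sigma>))"
    if "a \<le> \<tau>" for u \<tau>
  proof -
    have "((\<lambda>\<sigma>. pdt h (Complex x u, \<sigma>)) has_integral (h (Complex x u, \<tau>) - h (Complex x u, a))) {a..\<tau>}"
      by (rule fundamental_theorem_of_calculus[OF that])
         (auto intro: has_vector_derivative_at_within line_t dh)
    then show ?thesis by (simp add: integral_unique)
  qed
  have S2: "((\<lambda>u. integral {a..\<tau>} (\<lambda>\<sigma>. pdt h (Complex x u, \<sigma>))) has_vector_derivative integral {a..\<tau>} \<phi>) (at y)"
    for \<tau>
  proof -
    have "((\<lambda>u. integral (cbox a \<tau>) (\<lambda>\<sigma>. pdt h (Complex x u, \<sigma>))) has_vector_derivative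
        integral (cbox a \<tau>) (\<lambda>\<sigma>. pdy (pdt h) (Complex x y, \<sigma>))) (at y within UNIV)"
    proof (rule leibniz_rule_vector_derivative)
      fix u \<sigma>
      show "((\<lambda>u. pdt h (Complex x u, \<sigma>)) has_vector_derivative pdy (pdt h) (Complex x u, \<sigma>)) (at u within UNIV)"
        using line_y[OF dg] by simp
    next
      fix u
      show "(\<lambda>\<sigma>. pdt h (Complex x u, \<sigma>)) integrable_on cbox a \<tau>"
        by (rule integrable_continuous, rule cont_comp[OF cg]) (intro continuous_intros)
    next
      show "continuous_on (UNIV \<times> cbox a \<tau>) (\<lambda>(u, \<sigma>). pdy (pdt h) (Complex x u, \<sigma>))"
        unfolding split_beta by (rule cont_comp[OF cg' cont_pair_y])
    qed auto
    then show ?thesis unfolding \<phi>_def[abs_def] by simp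
  qed
  have S3: "pdy h (Complex x y, \<tau>) = pdy h (Complex x y, a) + integral {a..\<tau>} \<phi>" if "a \<le> \<tau>" for \<tau>
  proof -
    have e: "(\<lambda>u. h (Complex x u, \<tau>)) = (\<lambda>u. h (Complex x u, a) + integral {a..\<tau>} (\<lambda>\<sigma>. pdt h (Complex x u, \<sigma>)))"
      by (rule ext) (rule S1[OF that])
    have d2: "((\<lambda>u. h (Complex x u, \<tau>)) has_vector_derivative pdy h (Complex x y, a) + integral {a..\<tau>} \<phi>) (at y)"
      unfolding e by (rule has_vector_derivative_add[OF line_y[OF dh] S2])
    show ?thesis by (rule vector_derivative_unique_at[OF line_y[OF dh, where x=x and y=y and t=\<tau>] d2])
  qed
  have A1: "((\<lambda>u. integral {a..u} \<phi>) has_vector_derivative \<phi> t) (at t within {a..b})"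
  proof (rule integral_has_vector_derivative)
    show "continuous_on {a..b} \<phi>" unfolding \<phi>_def[abs_def]
      by (rule cont_comp[OF cg']) (intro continuous_intros)
    show "t \<in> {a..b}" by (simp add: a_def b_def)
  qed
  have A2: "at t within {a..b} = at t"
    by (rule at_within_interior) (simp add: a_def b_def)
  have A3: "((\<lambda>u. integral {a..u} \<phi>) has_vector_derivative \<phi> t) (at t)" using A1 unfolding A2 .
  have A4: "((\<lambda>u. pdy h (Complex x y, a) + integral {a..u} \<phi>) has_vector_derivative 0 + \<phi> t) (at t)"
    by (rule has_vector_derivative_add[OF has_vector_derivative_const A3])
  have A5: "((\<lambda>u. pdy h (Complex x y, u)) has_vector_derivative 0 + \<phi> t) (at t)"
  proof (rule has_vector_derivative_transform_within_open[OF A4, of "{a<..<b}"])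
    show "t \<in> {a<..<b}" by (simp add: a_def b_def)
    show "open {a<..<b}" by simp
    fix u assume "u \<in> {a<..<b}"
    then have "a \<le> u" by simp
    then show "pdy h (Complex x y, a) + integral {a..u} \<phi> = pdy h (Complex x y, u)" by (rule S3[symmetric])
  qed
  have "pdt (pdy h) (Complex x y, t) = 0 + \<phi> t"
    unfolding pdt_def using A5 by (simp only: fst_conv snd_conv vector_derivative_at)
  then show ?thesis by (simp add: \<phi>_def)
qed

lemma Complex_vd:
  assumes "(f1 has_field_derivative d1) (at s)" "(f2 has_field_derivative d2) (at s)"
  shows "((\<lambda>s. Complex (f1 s) (f2 s)) has_vector_derivative Complex d1 d2) (at s)"
  unfolding Complex_eq
  using has_vector_derivative_add[OF has_vector_derivative_of_real[OF assms(1)]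
     has_vector_derivative_mult_right[OF has_vector_derivative_of_real[OF assms(2)], of "\<i>"]] .

lemma hmul_gam_eq: "hmul p (gam r s) = (Complex (Re (fst p) + sqrt r * cos (s / sqrt r)) (Im (fst p) + sqrt r * sin (s / sqrt r)),
    snd p + sqrt r * s / 2 + (Re (fst p) * (sqrt r * sin (s / sqrt r)) - Im (fst p) * (sqrt r * cos (s / sqrt r))) / 2)"
  by (simp add: hmul_def gam_def complex_eq_iff)

lemma curve_vd:
  assumes r: "r > 0"
  shows "((\<lambda>s. hmul p (gam r s)) has_vector_derivative
    (Complex (- sin (s / sqrt r)) (cos (s / sqrt r)),
     sqrt r / 2 + (Re (fst p) * cos (s / sqrt r) + Im (fst p) * sin (s / sqrt r)) / 2)) (at s)"
proof -
  have sr: "sqrt r > 0" using r by simp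
  have srr: "sqrt r * sqrt r = r" using r by simp
  have srr2: "\<And>x. sqrt r * (sqrt r * x) = r * x" using srr by (metis mult.assoc)
  have d1: "((\<lambda>s. Re (fst p) + sqrt r * cos (s / sqrt r)) has_field_derivative (- sin (s / sqrt r))) (at s)"
    using sr by (auto intro!: derivative_eq_intros simp: field_simps srr)
  have d2: "((\<lambda>s. Im (fst p) + sqrt r * sin (s / sqrt r)) has_field_derivative (cos (s / sqrt r))) (at s)"
    using sr by (auto intro!: derivative_eq_intros simp: field_simps srr)
  have d3: "((\<lambda>s. snd p + sqrt r * s / 2 + (Re (fst p) * (sqrt r * sin (s / sqrt r)) - Im (fst p) * (sqrt r * cos (s / sqrt r))) / 2)
     has_field_derivative (sqrt r / 2 + (Re (fst p) * cos (s / sqrt r) + Im (fst p) * sin (s / sqrt r)) / 2)) (at s)"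
    using sr by (auto intro!: derivative_eq_intros simp: field_simps srr srr2)
  show ?thesis unfolding hmul_gam_eq
    by (rule has_vector_derivative_Pair[OF Complex_vd[OF d1 d2]])
       (simp add: has_real_derivative_iff_has_vector_derivative[symmetric] d3)
qed

lemma per_n:
  assumes "\<forall>z t. f (z, t + pi) = f (z, t)"
  shows "f (z, t + pi * real n) = f (z, t)"
proof (induction n)
  case 0 then show ?case by simp
next
  case (Suc n)
  have "f (z, t + pi * real (Suc n)) = f (z, (t + pi * real n) + pi)" by (simp add: algebra_simps)
  also have "\<dots> = f (z, t + pi * real n)" using assms by blast
  finally show ?case using Suc by simp
qed

lemma pdt_shift:
  assumes d: "\<And>P. f differentiable (at P)" and per: "\<And>s. f (z, s + c) = f (z, s)"
  shows "pdt f (z, t + c) = pdt f (z, t)"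
proof -
  have p: "((\<lambda>s. (z, s + c)) has_vector_derivative (Complex 0 0, 1)) (at t)"
    unfolding c00 by (auto intro!: derivative_eq_intros)
  have "((\<lambda>s. f (z, s + c)) has_vector_derivative
     (of_real 0 * pdx f (z, t + c) + of_real 0 * pdy f (z, t + c) + of_real 1 * pdt f (z, t + c))) (at t)"
    using chain_pd[OF d p] by simp
  then have "((\<lambda>s. f (z, s)) has_vector_derivative pdt f (z, t + c)) (at t)" using per by simp
  from vector_derivative_unique_at[OF this line_t[OF d]] show ?thesis .
qed

lemma key_alg:
  fixes A B C XX YY :: complex and x y sr cs sn :: real
  assumes "cs^2 + sn^2 = 1"
  shows "- ((XX + of_real (sr * sn) * (A - of_real ((y + sr * sn) / 2) * C) + (of_real (sr * sn) * (A - of_real ((y + sr * sn) / 2) * C) + of_real (sr * sn) * of_real (sr * sn) * C)) + ((YY + of_real (- (sr * cs)) * (B + of_real ((x + sr * cs) / 2) * C) + (of_real (- (sr * cs)) * (B + of_real ((x + sr * cs) / 2) * C) + of_real (- (sr * cs)) * of_real (- (sr * cs)) * C)))) + of_real (sr * sr) * C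
  = - (XX + YY) + of_real (2 * sr) * (of_real (- sn) * A + of_real cs * B + of_real (sr / 2 + (x * cs + y * sn) / 2) * C)"
proof -
  have h: "(of_real cs :: complex)^2 + (of_real sn)^2 = 1"
    using arg_cong[OF assms, of "of_real :: real \<Rightarrow> complex"] by simp
  show ?thesis using h by (simp add: field_simps)
qed

lemma TX_XT: "smooth f \<Longrightarrow> Tf (Xf f) Q = Xf (Tf f) Q"
proof -
  assume sm: "smooth f"
  obtain x y t where Q: "Q = (Complex x y, t)" by (metis complex.exhaust surj_pair)
  have "Tf (Xf f) Q = pdt (pdx f) Q + of_real (0 * Re (fst Q) + (-1/2) * Im (fst Q)) * pdt (pdt f) Q"
    unfolding Tf_def Xf_lop
    by (rule lop_pd(3)) (use smooth_diff[OF smooth_pdx[OF sm]] smooth_diff[OF smooth_pdt[OF sm]] in blast)+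
  then show ?thesis unfolding Q using sym_xt[OF sm, of x y t] by (simp add: Xf_def Tf_def)
qed

lemma TY_YT: "smooth f \<Longrightarrow> Tf (Yf f) Q = Yf (Tf f) Q"
proof -
  assume sm: "smooth f"
  obtain x y t where Q: "Q = (Complex x y, t)" by (metis complex.exhaust surj_pair)
  have "Tf (Yf f) Q = pdt (pdy f) Q + of_real ((1/2) * Re (fst Q) + 0 * Im (fst Q)) * pdt (pdt f) Q"
    unfolding Tf_def Yf_lop
    by (rule lop_pd(3)) (use smooth_diff[OF smooth_pdy[OF sm]] smooth_diff[OF smooth_pdt[OF sm]] in blast)+
  then show ?thesis unfolding Q using sym_yt[OF sm, of x y t] by (simp add: Yf_def Tf_def)
qed

lemma endpoint:
  assumes "a > 0" "b > 0"
  shows "hmul p (gam (real a / real b) (2 * pi * sqrt (real a * real b)))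
     = (fst (hmul p (gam (real a / real b) 0)), snd (hmul p (gam (real a / real b) 0)) + pi * real a)"
proof -
  have e1: "2 * pi * sqrt (real a * real b) / sqrt (real a / real b) = 2 * pi * real b"
  proof -
    have "sqrt (real a * real b) / sqrt (real a / real b) = sqrt (real a * real b / (real a / real b))"
      by (rule real_sqrt_divide[symmetric])
    also have "real a * real b / (real a / real b) = real b ^ 2" using assms by (simp add: field_simps power2_eq_square)
    also have "sqrt (real b ^ 2) = real b" by simp
    finally have "sqrt (real a * real b) / sqrt (real a / real b) = real b" .
    then show ?thesis by (simp only: times_divide_eq_right[symmetric])
  qed
  have e2: "sqrt (real a / real b) * (2 * pi * sqrt (real a * real b)) / 2 = pi * real a"
  proof -
    have "sqrt (real a / real b) * sqrt (real a * real b) = sqrt (real a / real b * (real a * real b))"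
      by (rule real_sqrt_mult[symmetric])
    also have "real a / real b * (real a * real b) = real a ^ 2" using assms by (simp add: field_simps power2_eq_square)
    also have "sqrt (real a ^ 2) = real a" by simp
    finally have "sqrt (real a / real b) * sqrt (real a * real b) = real a" .
    moreover have "\<And>X Y c. Y * X = c \<Longrightarrow> Y * (2 * pi * X) / 2 = pi * (c::real)" by auto
    ultimately show ?thesis by blast
  qed
  have c: "cis (2 * pi * real b) = 1" by (rule cis_multiple_2pi) simp
  show ?thesis unfolding hmul_def gam_def e1 e2 c by simp
qed

theorem mainTheorem12:
  fixes a b :: nat and f :: "complex \<times> real \<Rightarrow> complex"
  assumes "a > 0" and "b > 0" and "coprime a b"
    and "schwartz_Hbar f"
  shows "Iop a b (subLap f) = boxr (real a / real b) (Iop a b f)"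
proof (rule ext)
  fix p :: heis
  define r where "r = real a / real b"
  define L where "L = 2 * pi * sqrt (real a * real b)"
  define one where "one = (\<lambda>s::real. 1::complex)"
  define cv where "cv = (\<lambda>s. complex_of_real (gv r s))"
  define cu where "cu = (\<lambda>s. complex_of_real (- gu r s))"
  define cvv where "cvv = (\<lambda>s. complex_of_real (gv r s) * complex_of_real (gv r s))"
  define cuu where "cuu = (\<lambda>s. complex_of_real (- gu r s) * complex_of_real (- gu r s))"
  have r0: "r > 0" using assms by (simp add: r_def)
  have L0: "L \<ge> 0" by (simp add: L_def)
  have per: "\<forall>z t. f (z, t + pi) = f (z, t)" and sm: "smooth f"
    using assms(4) unfolding schwartz_Hbar_def smooth_def by blast+
  have Cf: "C1 f" using smooth_C1[OF sm] .
  have CX: "C1 (Xf f)" using smooth_C1_X[OF sm] .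
  have CY: "C1 (Yf f)" using smooth_C1_Y[OF sm] .
  have CT: "C1 (Tf f)" using smooth_C1[OF smooth_pdt[OF sm]] by (simp add: Tf_def)
  have c1: "continuous_on UNIV one" by (simp add: one_def)
  have ccv: "continuous_on UNIV cv" unfolding cv_def by (intro continuous_intros cont_gv)
  have ccu: "continuous_on UNIV cu" unfolding cu_def by (intro continuous_intros cont_gu)
  have ccvv: "continuous_on UNIV cvv" unfolding cvv_def by (intro continuous_intros cont_gv)
  have ccuu: "continuous_on UNIV cuu" unfolding cuu_def by (intro continuous_intros cont_gu)
  have G: "Iop a b f = J r L one f"
    by (rule ext) (simp add: Iop_def J_def r_def L_def one_def)
  have GL: "Iop a b (subLap f) p = J r L one (subLap f) p"
    by (simp add: Iop_def J_def r_def L_def one_def)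
  have XG: "Xf (J r L one f) = (\<lambda>q. J r L one (Xf f) q + J r L cv (Tf f) q)"
    by (rule ext, subst XJ[OF Cf c1]) (simp add: one_def cv_def)
  have YG: "Yf (J r L one f) = (\<lambda>q. J r L one (Yf f) q + J r L cu (Tf f) q)"
    by (rule ext, subst YJ[OF Cf c1]) (simp add: one_def cu_def)
  have TG: "Tf (J r L one f) = J r L one (Tf f)"
    by (rule ext, rule TJ[OF Cf c1])
  have XXG: "Xf (Xf (J r L one f)) p = J r L one (Xf (Xf f)) p + J r L cv (Tf (Xf f)) p
      + (J r L cv (Xf (Tf f)) p + J r L cvv (Tf (Tf f)) p)"
    unfolding XG Xf_Jadd[OF CX CT c1 ccv] XJ[OF CX c1] XJ[OF CT ccv]
    by (simp add: one_def cv_def cvv_def)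
  have YYG: "Yf (Yf (J r L one f)) p = J r L one (Yf (Yf f)) p + J r L cu (Tf (Yf f)) p
      + (J r L cu (Yf (Tf f)) p + J r L cuu (Tf (Tf f)) p)"
    unfolding YG Yf_Jadd[OF CY CT c1 ccu] YJ[OF CY c1] YJ[OF CT ccu]
    by (simp add: one_def cu_def cuu_def)
  have TTG: "Tf (Tf (J r L one f)) p = J r L one (Tf (Tf f)) p"
    unfolding TG TJ[OF CT c1] ..
  define Q where "Q s = hmul p (gam r s)" for s
  define Dd where "Dd s = of_real (- sin (s / sqrt r)) * pdx (Tf f) (Q s) + of_real (cos (s / sqrt r)) * pdy (Tf f) (Q s)
     + of_real (sqrt r / 2 + (Re (fst p) * cos (s / sqrt r) + Im (fst p) * sin (s / sqrt r)) / 2) * pdt (Tf f) (Q s)" for s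
  have dT: "\<And>P. Tf f differentiable (at P)" using CT unfolding C1_def by blast
  have deriv: "((\<lambda>s. Tf f (Q s)) has_vector_derivative Dd s) (at s)" for s
    unfolding Q_def Dd_def by (rule chain_pd[OF dT curve_vd[OF r0]])
  have iD0: "(Dd has_integral (Tf f (Q L) - Tf f (Q 0))) {0..L}"
    by (rule fundamental_theorem_of_calculus[OF L0]) (rule has_vector_derivative_at_within[OF deriv])
  have perT: "Tf f (z, t + pi * real a) = Tf f (z, t)" for z t
    unfolding Tf_def by (rule pdt_shift[OF smooth_diff[OF sm]]) (rule per_n[OF per])
  have QL: "Q L = (fst (Q 0), snd (Q 0) + pi * real a)"
    unfolding Q_def r_def L_def by (rule endpoint[OF assms(1,2)])
  have "Tf f (Q L) = Tf f (Q 0)" unfolding QL using perT[of "fst (Q 0)" "snd (Q 0)"] by simp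
  then have iD: "(Dd has_integral 0) {0..L}" using iD0 by simp
  have csub: "continuous_on UNIV (subLap f)"
  proof -
    have "subLap f = (\<lambda>Q. - (Xf (Xf f) Q + Yf (Yf f) Q))" by (rule ext) (simp add: subLap_def)
    then show ?thesis by (simp only:) (intro continuous_on_minus continuous_on_add C1_cont_X[OF CX] C1_cont_Y[OF CY])
  qed
  note iL = J_hi[OF c1 csub, where q=p and r=r and L=L]
  note i1 = J_hi[OF c1 C1_cont_X[OF CX], where q=p and r=r and L=L]
  note i2 = J_hi[OF ccv C1_cont_T[OF CX], where q=p and r=r and L=L]
  note i3 = J_hi[OF ccv C1_cont_X[OF CT], where q=p and r=r and L=L]
  note i4 = J_hi[OF ccvv C1_cont_T[OF CT], where q=p and r=r and L=L]
  note i5 = J_hi[OF c1 C1_cont_Y[OF CY], where q=p and r=r and L=L]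
  note i6 = J_hi[OF ccu C1_cont_T[OF CY], where q=p and r=r and L=L]
  note i7 = J_hi[OF ccu C1_cont_Y[OF CT], where q=p and r=r and L=L]
  note i8 = J_hi[OF ccuu C1_cont_T[OF CT], where q=p and r=r and L=L]
  note i9 = J_hi[OF c1 C1_cont_T[OF CT], where q=p and r=r and L=L]
  have srr: "sqrt r * sqrt r = r" using r0 by simp
  have main: "- ((J r L one (Xf (Xf f)) p + J r L cv (Tf (Xf f)) p
      + (J r L cv (Xf (Tf f)) p + J r L cvv (Tf (Tf f)) p))
     + (J r L one (Yf (Yf f)) p + J r L cu (Tf (Yf f)) p
      + (J r L cu (Yf (Tf f)) p + J r L cuu (Tf (Tf f)) p)))
     + of_real r * J r L one (Tf (Tf f)) p
     = J r L one (subLap f) p + of_real (2 * sqrt r) * 0"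
  proof (rule hi_eq[OF has_integral_add[OF has_integral_neg[OF has_integral_add[OF
        has_integral_add[OF has_integral_add[OF i1 i2] has_integral_add[OF i3 i4]]
        has_integral_add[OF has_integral_add[OF i5 i6] has_integral_add[OF i7 i8]]]]
        has_integral_mult_right[OF i9]] has_integral_add[OF iL has_integral_mult_right[OF iD]]])
    fix s
    note KA = key_alg[where XX = "Xf (Xf f) (Q s)" and YY = "Yf (Yf f) (Q s)"
       and A = "pdx (pdt f) (Q s)" and B = "pdy (pdt f) (Q s)" and C = "pdt (pdt f) (Q s)"
       and x = "Re (fst p)" and y = "Im (fst p)" and sr = "sqrt r"
       and cs = "cos (s / sqrt r)" and sn = "sin (s / sqrt r)", unfolded srr, OF sin_cos_squared_add2]
    show "- ((one s * Xf (Xf f) (hmul p (gam r s)) + cv s * Tf (Xf f) (hmul p (gam r s))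
      + (cv s * Xf (Tf f) (hmul p (gam r s)) + cvv s * Tf (Tf f) (hmul p (gam r s))))
     + (one s * Yf (Yf f) (hmul p (gam r s)) + cu s * Tf (Yf f) (hmul p (gam r s))
      + (cu s * Yf (Tf f) (hmul p (gam r s)) + cuu s * Tf (Tf f) (hmul p (gam r s)))))
     + of_real r * (one s * Tf (Tf f) (hmul p (gam r s)))
     = one s * subLap f (hmul p (gam r s)) + of_real (2 * sqrt r) * Dd s"
      using KA unfolding Q_def[symmetric] TX_XT[OF sm] TY_YT[OF sm]
      by (simp add: one_def cv_def cvv_def cu_def cuu_def gu_def gv_def Dd_def subLap_def
          Xf_def[of "Tf f"] Yf_def[of "Tf f"] Xf_def[of "pdt f"] Yf_def[of "pdt f"] Tf_def Q_def hmul_gam_Re hmul_gam_Im)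
  qed
  show "Iop a b (subLap f) p = boxr (real a / real b) (Iop a b f) p"
    unfolding GL boxr_def G subLap_def[of "J r L one f"] XXG YYG TTG r_def[symmetric]
    using main by simp
qed


end
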